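(* Let $B_1,B_2\in\mathbb{B}_n$ be rational boxes in $\mathbb{R}^n$. Then $B_1\uplus B_2\neq B_1\cup B_2$ if and only if (1) there exists $i\in\{1,\dots,n\}$ such that $\pi_i(B_1)\oplus\pi_i(B_2)\neq\pi_i(B_1)\cup\pi_i(B_2)$; or (2) there exist $i,j\in\{1,\dots,n\}$ with $i\neq j$ such that $\pi_i(B_1)\not\subseteq\pi_i(B_2)$ and $\pi_j(B_2)\not\subseteq\pi_j(B_1)$.
   Context: A rational interval constraint on dimension $i$ is a constraint $x_i\bowtie b$ with $\bowtie\in\{<,\le,=,\ge,>\}$ and $b\in\mathbb{Q}$. A rational box is the set of points of $\mathbb{R}^n$ satisfying a finite system of rational interval constraints; $\mathbb{B}_n$ is the set of all rational boxes (including $\emptyset$). Equivalently, a non-empty rational box is a Cartesian product of $n$ non-empty, possibly unbounded, real intervals with rational, possibly open endpoints. Let $\mathbb{I}$ be the set of such intervals together with $\emptyset$, and for $I_1,I_2\in\mathbb{I}$ let $I_1\oplus I_2$ be the smallest element of $\mathbb{I}$ (w.r.t. inclusion) containing $I_1\cup I_2$. For $S\subseteq\mathbb{R}^n$, $\pi_i(S)=\{v_i : \mathbf{v}\in S\}$. $B_1\uplus B_2$ is the smallest rational box containing $B_1\cup B_2$; for non-empty boxes it equals $(\pi_1(B_1)\oplus\pi_1(B_2))\times\cdots\times(\pi_n(B_1)\oplus\pi_n(B_2))$. *)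

theory Defs
  imports "HOL-Analysis.Analysis"
begin

datatype cmp_rel = CLt | CLe | CEq | CGe | CGt

fun sat_rel :: "cmp_rel \<Rightarrow> real \<Rightarrow> real \<Rightarrow> bool" where
  "sat_rel CLt x b = (x < b)"
| "sat_rel CLe x b = (x \<le> b)"
| "sat_rel CEq x b = (x = b)"
| "sat_rel CGe x b = (x \<ge> b)"
| "sat_rel CGt x b = (x > b)"

definition rational_box :: "(real^'n) set \<Rightarrow> bool" where
  "rational_box B \<longleftrightarrow> (\<exists>C :: ('n \<times> cmp_rel \<times> real) set.
     finite C \<and> (\<forall>(i, r, b)\<in>C. b \<in> \<rat>) \<and>
     B = {x. \<forall>(i, r, b)\<in>C. sat_rel r (x $ i) b})"

text \<open>Elements of the set I: non-empty, possibly unbounded real intervals with rational,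
  possibly open endpoints, together with the empty set; equivalently the solution sets of
  finite systems of rational interval constraints on one real variable.\<close>
definition rational_interval :: "real set \<Rightarrow> bool" where
  "rational_interval I \<longleftrightarrow> (\<exists>C :: (cmp_rel \<times> real) set.
     finite C \<and> (\<forall>(r, b)\<in>C. b \<in> \<rat>) \<and>
     I = {x. \<forall>(r, b)\<in>C. sat_rel r x b})"

definition interval_join :: "real set \<Rightarrow> real set \<Rightarrow> real set" where
  "interval_join I1 I2 = (LEAST I. rational_interval I \<and> I1 \<union> I2 \<subseteq> I)"

definition box_join :: "(real^'n) set \<Rightarrow> (real^'n) set \<Rightarrow> (real^'n) set" where
  "box_join B1 B2 = (LEAST B. rational_box B \<and> B1 \<union> B2 \<subseteq> B)"

definition proj :: "'n \<Rightarrow> (real^'n) set \<Rightarrow> real set" where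
  "proj i S = (\<lambda>v. v $ i) ` S"

end

theory Submission
  imports Defs
begin

definition hull1 :: "real set \<Rightarrow> real set" where
  "hull1 S = {x. \<forall>r b. b \<in> \<rat> \<and> (\<forall>s\<in>S. sat_rel r s b) \<longrightarrow> sat_rel r x b}"

definition sameside :: "real set \<Rightarrow> real \<Rightarrow> real \<Rightarrow> bool" where
  "sameside D s x \<longleftrightarrow> (\<forall>d\<in>D. (s < d \<longleftrightarrow> x < d) \<and> (s = d \<longleftrightarrow> x = d) \<and> (d < s \<longleftrightarrow> d < x))"

lemma sat_rel_same:
  "(s < b \<longleftrightarrow> x < b) \<Longrightarrow> (s = b \<longleftrightarrow> x = b) \<Longrightarrow> (b < s \<longleftrightarrow> b < x) \<Longrightarrow> sat_rel r s b \<longleftrightarrow> sat_rel r x b"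
  by (cases r) auto

lemma ri_inv:
  assumes "I = {x. \<forall>(r,b)\<in>C. sat_rel r x b}" "s \<in> I" "sameside D s x" "snd ` C \<subseteq> D"
  shows "x \<in> I"
proof -
  have "sat_rel r x b" if "(r,b) \<in> C" for r b
  proof -
    have "b \<in> D" using that assms(4) by force
    then have "(s < b \<longleftrightarrow> x < b) \<and> (s = b \<longleftrightarrow> x = b) \<and> (b < s \<longleftrightarrow> b < x)"
      using assms(3) unfolding sameside_def by blast
    moreover have "sat_rel r s b" using assms(1,2) that by auto
    ultimately show ?thesis using sat_rel_same by blast
  qed
  then show ?thesis using assms(1) by auto
qed

lemma sup_in:
  assumes "finite D" "S \<noteq> {}" "bdd_above S" "\<And>s x. s \<in> S \<Longrightarrow> sameside D s x \<Longrightarrow> x \<in> S"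
  shows "Sup S \<in> D"
proof (rule ccontr)
  define m where "m = Sup S"
  assume nd: "Sup S \<notin> D"
  define \<delta> where "\<delta> = Min (insert 1 ((\<lambda>d. \<bar>d - m\<bar>) ` D))"
  have dpos: "\<delta> > 0" using assms(1) nd unfolding \<delta>_def m_def by (auto simp: Min_gr_iff)
  have dle: "\<delta> \<le> \<bar>d - m\<bar>" if "d \<in> D" for d
    unfolding \<delta>_def using assms(1) that by (intro Min_le) auto
  have "m - \<delta> < Sup S" using dpos m_def by simp
  then obtain s where s: "s \<in> S" "m - \<delta> < s" using less_cSupD[OF assms(2)] by blast
  have sm: "s \<le> m" using s assms(3) m_def by (simp add: cSup_upper)
  have "sameside D s (m + \<delta>/2)"
    unfolding sameside_def
  proof
    fix d assume "d \<in> D"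
    then have "\<delta> \<le> \<bar>d - m\<bar>" by (rule dle)
    then show "(s < d \<longleftrightarrow> m + \<delta>/2 < d) \<and> (s = d \<longleftrightarrow> m + \<delta>/2 = d) \<and> (d < s \<longleftrightarrow> d < m + \<delta>/2)"
      using s sm dpos by (cases "d \<ge> m") auto
  qed
  then have "m + \<delta>/2 \<in> S" using assms(4) s by blast
  then have "m + \<delta>/2 \<le> Sup S" by (rule cSup_upper[OF _ assms(3)])
  then show False using dpos m_def by simp
qed

lemma inf_in:
  assumes "finite D" "S \<noteq> {}" "bdd_below S" "\<And>s x. s \<in> S \<Longrightarrow> sameside D s x \<Longrightarrow> x \<in> S"
  shows "Inf S \<in> D"
proof (rule ccontr)
  define m where "m = Inf S"
  assume nd: "Inf S \<notin> D"
  define \<delta> where "\<delta> = Min (insert 1 ((\<lambda>d. \<bar>d - m\<bar>) ` D))"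
  have dpos: "\<delta> > 0" using assms(1) nd unfolding \<delta>_def m_def by (auto simp: Min_gr_iff)
  have dle: "\<delta> \<le> \<bar>d - m\<bar>" if "d \<in> D" for d
    unfolding \<delta>_def using assms(1) that by (intro Min_le) auto
  have "Inf S < m + \<delta>" using dpos m_def by simp
  then obtain s where s: "s \<in> S" "s < m + \<delta>" using cInf_lessD[OF assms(2)] by blast
  have sm: "m \<le> s" using s assms(3) m_def by (simp add: cInf_lower)
  have "sameside D s (m - \<delta>/2)"
    unfolding sameside_def
  proof
    fix d assume "d \<in> D"
    then have "\<delta> \<le> \<bar>d - m\<bar>" by (rule dle)
    then show "(s < d \<longleftrightarrow> m - \<delta>/2 < d) \<and> (s = d \<longleftrightarrow> m - \<delta>/2 = d) \<and> (d < s \<longleftrightarrow> d < m - \<delta>/2)"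
      using s sm dpos by (cases "d \<ge> m") auto
  qed
  then have "m - \<delta>/2 \<in> S" using assms(4) s by blast
  then have "Inf S \<le> m - \<delta>/2" by (rule cInf_lower[OF _ assms(3)])
  then show False using dpos m_def by simp
qed

lemma hull1_sub: "rational_interval K \<Longrightarrow> S \<subseteq> K \<Longrightarrow> hull1 S \<subseteq> K"
  unfolding rational_interval_def hull1_def by fastforce

lemma hull1_sup: "S \<subseteq> hull1 S"
  unfolding hull1_def by auto

lemma join_ri:
  assumes "rational_interval I1" "rational_interval I2"
  shows "rational_interval (hull1 (I1 \<union> I2))"
proof -
  obtain C1 where C1: "finite C1" "\<forall>(r,b)\<in>C1. b\<in>\<rat>" "I1 = {x. \<forall>(r,b)\<in>C1. sat_rel r x b}"
    using assms(1) unfolding rational_interval_def by blast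
  obtain C2 where C2: "finite C2" "\<forall>(r,b)\<in>C2. b\<in>\<rat>" "I2 = {x. \<forall>(r,b)\<in>C2. sat_rel r x b}"
    using assms(2) unfolding rational_interval_def by blast
  define D where "D = snd ` C1 \<union> snd ` C2"
  define S where "S = I1 \<union> I2"
  have fD: "finite D" using C1 C2 D_def by auto
  have DQ: "\<forall>d\<in>D. d \<in> \<rat>" using C1(2) C2(2) D_def by auto
  have inv: "x \<in> S" if "s \<in> S" "sameside D s x" for s x
  proof -
    have "sameside D' s x" if "D' \<subseteq> D" for D' using \<open>sameside D s x\<close> that
      unfolding sameside_def by blast
    then show ?thesis using \<open>s \<in> S\<close> ri_inv[OF C1(3)] ri_inv[OF C2(3)] S_def D_def by blast
  qed
  have emp: "D \<noteq> {}" if "S = {}"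
  proof
    assume "D = {}"
    then have "C1 = {}" using D_def by auto
    then have "I1 = UNIV" using C1(3) by auto
    then show False using that S_def by auto
  qed
  define Cs where "Cs = {(r,b). b \<in> D \<and> (\<forall>s\<in>S. sat_rel r s b)}"
  have "Cs \<subseteq> {CLt,CLe,CEq,CGe,CGt} \<times> D"
  proof
    fix c assume "c \<in> Cs"
    then show "c \<in> {CLt,CLe,CEq,CGe,CGt} \<times> D" unfolding Cs_def
      by (cases c; cases "fst c") auto
  qed
  then have fin: "finite Cs" using fD by (meson finite.emptyI finite.insertI finite_SigmaI finite_subset)
  have CsQ: "\<forall>(r,b)\<in>Cs. b\<in>\<rat>" using DQ Cs_def by auto
  have eq: "hull1 S = {x. \<forall>(r,b)\<in>Cs. sat_rel r x b}"
  proof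
    show "hull1 S \<subseteq> {x. \<forall>(r,b)\<in>Cs. sat_rel r x b}"
      unfolding hull1_def Cs_def using DQ by auto
  next
    show "{x. \<forall>(r,b)\<in>Cs. sat_rel r x b} \<subseteq> hull1 S"
    proof
      fix t assume t: "t \<in> {x. \<forall>(r,b)\<in>Cs. sat_rel r x b}"
      then have tC: "sat_rel r t b" if "b \<in> D" "\<forall>s\<in>S. sat_rel r s b" for r b
        using that unfolding Cs_def by auto
      show "t \<in> hull1 S"
      proof (cases "S = {}")
        case True
        then obtain d where "d \<in> D" using emp by blast
        then have "t < d" "t > d" using tC[of d CLt] tC[of d CGt] True by auto
        then show ?thesis by simp
      next
        case ne: False
        have up: "t \<le> c \<and> (t = c \<longrightarrow> c \<in> S)" if "\<forall>s\<in>S. s \<le> c" for c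
        proof -
          have bdd: "bdd_above S" using that by (auto intro: bdd_aboveI)
          have mD: "Sup S \<in> D" using sup_in[OF fD ne bdd] inv by blast
          have mc: "Sup S \<le> c" using that ne by (simp add: cSup_least)
          have le: "\<forall>s\<in>S. s \<le> Sup S" using cSup_upper[OF _ bdd] by blast
          show ?thesis
          proof (cases "Sup S \<in> S")
            case True
            have tl: "t \<le> Sup S" using tC[of "Sup S" CLe] mD le by simp
            have "t \<le> c" using tl mc by linarith
            moreover have "t = c \<Longrightarrow> c \<in> S" using mc True tl by (metis order_antisym)
            ultimately show ?thesis by blast
          next
            case False
            have "\<forall>s\<in>S. s < Sup S" using False le by (metis order_le_less)
            then have "t < Sup S" using tC[of "Sup S" CLt] mD by simp
            then have "t < c" using mc by linarith
            then show ?thesis by simp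
          qed
        qed
        have down: "c \<le> t \<and> (t = c \<longrightarrow> c \<in> S)" if "\<forall>s\<in>S. c \<le> s" for c
        proof -
          have bdd: "bdd_below S" using that by (auto intro: bdd_belowI)
          have mD: "Inf S \<in> D" using inf_in[OF fD ne bdd] inv by blast
          have mc: "c \<le> Inf S" using that ne by (simp add: cInf_greatest)
          have le: "\<forall>s\<in>S. Inf S \<le> s" using cInf_lower[OF _ bdd] by blast
          show ?thesis
          proof (cases "Inf S \<in> S")
            case True
            have tl: "Inf S \<le> t" using tC[of "Inf S" CGe] mD le by simp
            have "c \<le> t" using tl mc by linarith
            moreover have "t = c \<Longrightarrow> c \<in> S" using mc True tl by (metis order_antisym)
            ultimately show ?thesis by blast
          next
            case False
            have "\<forall>s\<in>S. Inf S < s" using False le by (metis order_le_less)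
            then have "Inf S < t" using tC[of "Inf S" CGt] mD by simp
            then have "c < t" using mc by linarith
            then show ?thesis by simp
          qed
        qed
        have "sat_rel r t b" if "\<forall>s\<in>S. sat_rel r s b" for r b
        proof (cases r)
          case CLt
          then show ?thesis using up[of b] that by fastforce
        next
          case CLe
          then show ?thesis using up[of b] that by fastforce
        next
          case CEq
          then show ?thesis using up[of b] down[of b] that by fastforce
        next
          case CGe
          then show ?thesis using down[of b] that by fastforce
        next
          case CGt
          then show ?thesis using down[of b] that by fastforce
        qed
        then show ?thesis unfolding hull1_def by auto
      qed
    qed
  qed
  show ?thesis unfolding rational_interval_def S_def[symmetric]
    using fin CsQ eq by blast
qed

lemma join_eq:
  assumes "rational_interval I1" "rational_interval I2"
  shows "interval_join I1 I2 = hull1 (I1 \<union> I2)"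
  unfolding interval_join_def
  by (rule Least_equality) (use assms join_ri hull1_sup hull1_sub in auto)

lemma empty_ri: "rational_interval {}"
  unfolding rational_interval_def
  by (rule exI[of _ "{(CLt,0),(CGt,0)}"]) auto

lemma box_ex:
  assumes "rational_box (B :: (real^'n) set)"
  shows "\<exists>S. (\<forall>i. rational_interval (S i)) \<and> B = {x. \<forall>i. x$i \<in> S i}"
proof -
  obtain C :: "('n \<times> cmp_rel \<times> real) set" where C: "finite C" "\<forall>(i, r, b)\<in>C. b \<in> \<rat>"
     "B = {x. \<forall>(i, r, b)\<in>C. sat_rel r (x $ i) b}"
    using assms unfolding rational_box_def by blast
  define S where "S i = {t. \<forall>(j, r, b)\<in>C. j = i \<longrightarrow> sat_rel r t b}" for i
  have "rational_interval (S i)" for i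
    unfolding rational_interval_def
  proof (intro exI[of _ "(\<lambda>(j,r,b). (r,b)) ` {c\<in>C. fst c = i}"] conjI)
    show "finite ((\<lambda>(j,r,b). (r,b)) ` {c\<in>C. fst c = i})" using C(1) by auto
    show "\<forall>(r, b)\<in>(\<lambda>(j,r,b). (r,b)) ` {c\<in>C. fst c = i}. b \<in> \<rat>" using C(2) by auto
    show "S i = {x. \<forall>(r, b)\<in>(\<lambda>(j,r,b). (r,b)) ` {c\<in>C. fst c = i}. sat_rel r x b}"
      unfolding S_def by fastforce
  qed
  moreover have "B = {x. \<forall>i. x$i \<in> S i}" unfolding C(3) S_def by fastforce
  ultimately show ?thesis by blast
qed

lemma proj_prod:
  assumes "B = {x :: real^'n. \<forall>i. x$i \<in> S i}" "B \<noteq> {}"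
  shows "proj i B = S i"
proof
  show "proj i B \<subseteq> S i" using assms(1) unfolding proj_def by auto
  show "S i \<subseteq> proj i B"
  proof
    fix t assume t: "t \<in> S i"
    obtain w where w: "w \<in> B" using assms(2) by blast
    define x where "x = (\<chi> j. if j = i then t else w$j)"
    have "x \<in> B" using w t assms(1) unfolding x_def by auto
    moreover have "x$i = t" unfolding x_def by simp
    ultimately show "t \<in> proj i B" unfolding proj_def by force
  qed
qed

lemma proj_ri:
  assumes "rational_box (B :: (real^'n) set)"
  shows "rational_interval (proj i B)"
proof (cases "B = {}")
  case True
  then show ?thesis using empty_ri unfolding proj_def by simp
next
  case False
  obtain S where S: "\<forall>i. rational_interval (S i)" "B = {x. \<forall>i. x$i \<in> S i}"
    using box_ex[OF assms] by blast
  have "proj i B = S i" by (rule proj_prod[OF S(2) False])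
  then show ?thesis using S(1) by simp
qed

lemma box_repr:
  assumes "rational_box (B :: (real^'n) set)" "B \<noteq> {}"
  shows "B = {x. \<forall>i. x$i \<in> proj i B}"
proof -
  obtain S where S: "B = {x. \<forall>i. x$i \<in> S i}" using box_ex[OF assms(1)] by blast
  then show ?thesis using proj_prod[OF S assms(2)] by simp
qed

lemma mem_proj: "x \<in> B \<Longrightarrow> x$i \<in> proj i B"
  unfolding proj_def by auto

lemma prod_box:
  assumes "\<forall>i. rational_interval (S i)"
  shows "rational_box {x :: real^'n. \<forall>i. x$i \<in> S i}"
proof -
  have "\<forall>i. \<exists>Ci. finite Ci \<and> (\<forall>(r,b)\<in>Ci. b\<in>\<rat>) \<and> S i = {x. \<forall>(r,b)\<in>Ci. sat_rel r x b}"
    using assms unfolding rational_interval_def by blast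
  then have "\<exists>C. \<forall>i. finite (C i) \<and> (\<forall>(r,b)\<in>C i. b\<in>\<rat>) \<and> S i = {x. \<forall>(r,b)\<in>C i. sat_rel r x b}"
    by (rule choice)
  then obtain C where C: "\<forall>i. finite (C i) \<and> (\<forall>(r,b)\<in>C i. b\<in>\<rat>) \<and> S i = {x. \<forall>(r,b)\<in>C i. sat_rel r x b}"
    by blast
  define CC where "CC = (\<Union>i. (\<lambda>(r,b). (i,r,b)) ` C i)"
  have "finite CC" unfolding CC_def using C by auto
  moreover have "\<forall>(i, r, b)\<in>CC. b \<in> \<rat>" unfolding CC_def using C by fastforce
  moreover have "{x :: real^'n. \<forall>i. x$i \<in> S i} = {x. \<forall>(i, r, b)\<in>CC. sat_rel r (x $ i) b}"
    unfolding CC_def using C by fastforce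
  ultimately show ?thesis unfolding rational_box_def by blast
qed

lemma hull1_ri: "rational_interval I \<Longrightarrow> hull1 I = I"
  using hull1_sub hull1_sup by blast

lemma join_empty: "rational_box B2 \<Longrightarrow> box_join {} B2 = B2"
  unfolding box_join_def by (rule Least_equality) auto

lemma join_empty2: "rational_box B1 \<Longrightarrow> box_join B1 {} = B1"
  unfolding box_join_def by (rule Least_equality) auto

lemma join_prod:
  fixes B1 B2 :: "(real^'n) set"
  assumes "rational_box B1" "rational_box B2" "B1 \<noteq> {}" "B2 \<noteq> {}"
  shows "box_join B1 B2 = {x. \<forall>i. x$i \<in> interval_join (proj i B1) (proj i B2)}"
  unfolding box_join_def
proof (rule Least_equality)
  let ?P = "{x :: real^'n. \<forall>i. x$i \<in> interval_join (proj i B1) (proj i B2)}"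
  have J: "interval_join (proj i B1) (proj i B2) = hull1 (proj i B1 \<union> proj i B2)" for i
    using join_eq proj_ri assms by blast
  show "rational_box ?P \<and> B1 \<union> B2 \<subseteq> ?P"
  proof
    have "\<forall>i. rational_interval (interval_join (proj i B1) (proj i B2))"
      unfolding J using join_ri proj_ri assms by blast
    then show "rational_box ?P" by (rule prod_box)
    show "B1 \<union> B2 \<subseteq> ?P"
    proof
      fix x assume x: "x \<in> B1 \<union> B2"
      have "x$i \<in> interval_join (proj i B1) (proj i B2)" for i
      proof -
        have "x$i \<in> proj i B1 \<union> proj i B2" using x mem_proj by blast
        then show ?thesis unfolding J using hull1_sup by blast
      qed
      then show "x \<in> ?P" by blast
    qed
  qed
  fix K :: "(real^'n) set" assume K: "rational_box K \<and> B1 \<union> B2 \<subseteq> K"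
  then have Kne: "K \<noteq> {}" using assms(3) by blast
  have "hull1 (proj i B1 \<union> proj i B2) \<subseteq> proj i K" for i
    using K hull1_sub[OF proj_ri] unfolding proj_def by (metis image_Un image_mono)
  then show "?P \<subseteq> K" unfolding J using box_repr[OF _ Kne] K by blast
qed

theorem theorem5:
  fixes B1 B2 :: "(real^'n) set"
  assumes "rational_box B1" and "rational_box B2"
  shows "box_join B1 B2 \<noteq> B1 \<union> B2 \<longleftrightarrow>
    ((\<exists>i. interval_join (proj i B1) (proj i B2) \<noteq> proj i B1 \<union> proj i B2) \<or>
     (\<exists>i j. i \<noteq> j \<and> \<not> proj i B1 \<subseteq> proj i B2 \<and> \<not> proj j B2 \<subseteq> proj j B1))"
proof (cases "B1 = {} \<or> B2 = {}")
  case True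
  have pe: "proj i {} = {}" for i unfolding proj_def by simp
  have "interval_join (proj i B1) (proj i B2) = proj i B1 \<union> proj i B2" for i
  proof -
    have "interval_join (proj i B1) (proj i B2) = hull1 (proj i B1 \<union> proj i B2)"
      using join_eq proj_ri assms by blast
    moreover have "hull1 (proj i B1) = proj i B1" "hull1 (proj i B2) = proj i B2"
      using hull1_ri proj_ri assms by blast+
    ultimately show ?thesis using True by (elim disjE) (simp_all add: pe)
  qed
  moreover have "box_join B1 B2 = B1 \<union> B2" using True join_empty join_empty2 assms by auto
  ultimately show ?thesis using True by (elim disjE) (simp_all add: pe)
next
  case False
  let ?J = "\<lambda>i. interval_join (proj i B1) (proj i B2)"
  have BJ: "box_join B1 B2 = {x. \<forall>i. x$i \<in> ?J i}" using join_prod assms False by blast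
  have R1: "B1 = {x. \<forall>i. x$i \<in> proj i B1}" using box_repr assms(1) False by blast
  have R2: "B2 = {x. \<forall>i. x$i \<in> proj i B2}" using box_repr assms(2) False by blast
  have Jsup: "proj i B1 \<union> proj i B2 \<subseteq> ?J i" for i
    using join_eq proj_ri assms hull1_sup by metis
  obtain w where w: "w \<in> B1" using False by blast
  show ?thesis
  proof
    assume ne: "box_join B1 B2 \<noteq> B1 \<union> B2"
    show "(\<exists>i. ?J i \<noteq> proj i B1 \<union> proj i B2) \<or>
     (\<exists>i j. i \<noteq> j \<and> \<not> proj i B1 \<subseteq> proj i B2 \<and> \<not> proj j B2 \<subseteq> proj j B1)"
    proof (rule ccontr)
      assume "\<not> ?thesis"
      then have n1: "\<And>i. ?J i = proj i B1 \<union> proj i B2"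
        and n2: "\<And>i j. i \<noteq> j \<Longrightarrow> proj i B1 \<subseteq> proj i B2 \<or> proj j B2 \<subseteq> proj j B1" by blast+
      have "box_join B1 B2 \<subseteq> B1 \<union> B2"
      proof
        fix x assume "x \<in> box_join B1 B2"
        then have x: "\<And>i. x$i \<in> proj i B1 \<union> proj i B2" using BJ n1 by blast
        show "x \<in> B1 \<union> B2"
        proof (rule ccontr)
          assume "x \<notin> B1 \<union> B2"
          then obtain i j where i: "x$i \<notin> proj i B1" and j: "x$j \<notin> proj j B2"
            using R1 R2 by blast
          have "i \<noteq> j" using x i j by blast
          then show False using n2[of j i] x i j by blast
        qed
      qed
      moreover have "B1 \<union> B2 \<subseteq> box_join B1 B2" using BJ Jsup mem_proj by blast
      ultimately show False using ne by blast
    qed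
  next
    assume "(\<exists>i. ?J i \<noteq> proj i B1 \<union> proj i B2) \<or>
     (\<exists>i j. i \<noteq> j \<and> \<not> proj i B1 \<subseteq> proj i B2 \<and> \<not> proj j B2 \<subseteq> proj j B1)"
    then show "box_join B1 B2 \<noteq> B1 \<union> B2"
    proof
      assume "\<exists>i. ?J i \<noteq> proj i B1 \<union> proj i B2"
      then obtain i t where t: "t \<in> ?J i" "t \<notin> proj i B1 \<union> proj i B2" using Jsup by blast
      define x where "x = (\<chi> j. if j = i then t else w$j)"
      have "x \<in> box_join B1 B2" unfolding BJ x_def using t w Jsup mem_proj by (auto intro!: set_mp[OF Jsup UnI1])
      moreover have "x \<notin> B1 \<union> B2" using t mem_proj[of x _ i] unfolding x_def by auto
      ultimately show ?thesis by blast
    next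
      assume "\<exists>i j. i \<noteq> j \<and> \<not> proj i B1 \<subseteq> proj i B2 \<and> \<not> proj j B2 \<subseteq> proj j B1"
      then obtain i j a b where ij: "i \<noteq> j" and a: "a \<in> proj i B1" "a \<notin> proj i B2"
        and b: "b \<in> proj j B2" "b \<notin> proj j B1" by blast
      define x where "x = (\<chi> k. if k = i then a else if k = j then b else w$k)"
      have "x$k \<in> ?J k" for k
      proof -
        have "w$k \<in> proj k B1" using w mem_proj by blast
        then show ?thesis unfolding x_def using a b Jsup by auto
      qed
      then have "x \<in> box_join B1 B2" unfolding BJ by blast
      moreover have "x \<notin> B1" using b ij mem_proj[of x _ j] unfolding x_def by auto
      moreover have "x \<notin> B2" using a mem_proj[of x _ i] unfolding x_def by auto
      ultimately show ?thesis by blast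
    qed
  qed
qed

end
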